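(* There exist a locally finite semilattice $T$ and a submultiplicative weight $\omega$ on $T$ such that $\ell^1_\omega(T)$ is not AMNM.
   Context: A semilattice is a commutative semigroup in which every element is idempotent; it is locally finite if every finitely generated subsemigroup is finite. A weight on $T$ is a function $\omega:T\to(0,\infty)$; it is submultiplicative if $\omega(xy)\le\omega(x)\omega(y)$ for all $x,y$. $\ell^1_\omega(T)$ is the Banach space of $a:T\to\mathbb C$ with $\|a\|=\sum_{t}|a(t)|\omega(t)<\infty$, a Banach algebra under convolution ($\delta_x*\delta_y=\delta_{xy}$). For a bounded linear map $T:A\to B$ between Banach algebras, $\operatorname{def}(T)=\sup\{\|T(xy)-T(x)T(y)\|:\|x\|,\|y\|\le1\}$; $\operatorname{Mult}(A,B)$ is the set of bounded linear multiplicative maps $A\to B$ (including $0$). A Banach algebra $A$ is AMNM if for every $\varepsilon>0$ there is $\delta>0$ such that every $\psi\in A^*$ with $\operatorname{def}(\psi)\le\delta$ satisfies $\operatorname{dist}_{A^*}(\psi,\operatorname{Mult}(A,\mathbb C))\le\varepsilon$. *)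

theory Defs
  imports "HOL-Analysis.Analysis"
begin

definition semilattice_on :: "'a set \<Rightarrow> ('a \<Rightarrow> 'a \<Rightarrow> 'a) \<Rightarrow> bool" where
  "semilattice_on S op \<longleftrightarrow>
     (\<forall>x\<in>S. \<forall>y\<in>S. op x y \<in> S) \<and>
     (\<forall>x\<in>S. \<forall>y\<in>S. \<forall>z\<in>S. op (op x y) z = op x (op y z)) \<and>
     (\<forall>x\<in>S. \<forall>y\<in>S. op x y = op y x) \<and>
     (\<forall>x\<in>S. op x x = x)"

definition gen_subsemigroup :: "('a \<Rightarrow> 'a \<Rightarrow> 'a) \<Rightarrow> 'a set \<Rightarrow> 'a set" where
  "gen_subsemigroup op F = \<Inter>{U. F \<subseteq> U \<and> (\<forall>x\<in>U. \<forall>y\<in>U. op x y \<in> U)}"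

definition locally_finite_on :: "'a set \<Rightarrow> ('a \<Rightarrow> 'a \<Rightarrow> 'a) \<Rightarrow> bool" where
  "locally_finite_on S op \<longleftrightarrow>
     (\<forall>F. F \<subseteq> S \<and> finite F \<longrightarrow> finite (gen_subsemigroup op F))"

definition weight_on :: "'a set \<Rightarrow> ('a \<Rightarrow> real) \<Rightarrow> bool" where
  "weight_on S \<omega> \<longleftrightarrow> (\<forall>t\<in>S. \<omega> t > 0)"

definition submult_weight_on :: "'a set \<Rightarrow> ('a \<Rightarrow> 'a \<Rightarrow> 'a) \<Rightarrow> ('a \<Rightarrow> real) \<Rightarrow> bool" where
  "submult_weight_on S op \<omega> \<longleftrightarrow> weight_on S \<omega> \<and>
     (\<forall>x\<in>S. \<forall>y\<in>S. \<omega> (op x y) \<le> \<omega> x * \<omega> y)"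

definition l1w :: "'a set \<Rightarrow> ('a \<Rightarrow> real) \<Rightarrow> ('a \<Rightarrow> complex) set" where
  "l1w S \<omega> = {a. (\<forall>t. t \<notin> S \<longrightarrow> a t = 0) \<and> (\<lambda>t. norm (a t) * \<omega> t) summable_on S}"

definition l1w_norm :: "'a set \<Rightarrow> ('a \<Rightarrow> real) \<Rightarrow> ('a \<Rightarrow> complex) \<Rightarrow> real" where
  "l1w_norm S \<omega> a = (\<Sum>\<^sub>\<infinity>t\<in>S. norm (a t) * \<omega> t)"

definition l1w_conv :: "'a set \<Rightarrow> ('a \<Rightarrow> 'a \<Rightarrow> 'a) \<Rightarrow> ('a \<Rightarrow> complex) \<Rightarrow> ('a \<Rightarrow> complex) \<Rightarrow> 'a \<Rightarrow> complex" where
  "l1w_conv S op a b t = (\<Sum>\<^sub>\<infinity>(x, y)\<in>{(x, y). x \<in> S \<and> y \<in> S \<and> op x y = t}. a x * b y)"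

(* bounded linear functionals on l^1_omega(S) (only values on l1w S \<omega> matter) *)
definition l1w_dual :: "'a set \<Rightarrow> ('a \<Rightarrow> real) \<Rightarrow> (('a \<Rightarrow> complex) \<Rightarrow> complex) set" where
  "l1w_dual S \<omega> = {\<psi>.
     (\<forall>a\<in>l1w S \<omega>. \<forall>b\<in>l1w S \<omega>. \<psi> (\<lambda>t. a t + b t) = \<psi> a + \<psi> b) \<and>
     (\<forall>a\<in>l1w S \<omega>. \<forall>c. \<psi> (\<lambda>t. c * a t) = c * \<psi> a) \<and>
     (\<exists>C. \<forall>a\<in>l1w S \<omega>. norm (\<psi> a) \<le> C * l1w_norm S \<omega> a)}"

definition dual_norm :: "'a set \<Rightarrow> ('a \<Rightarrow> real) \<Rightarrow> (('a \<Rightarrow> complex) \<Rightarrow> complex) \<Rightarrow> real" where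
  "dual_norm S \<omega> \<psi> = Sup {norm (\<psi> a) | a. a \<in> l1w S \<omega> \<and> l1w_norm S \<omega> a \<le> 1}"

definition mult_defect :: "'a set \<Rightarrow> ('a \<Rightarrow> 'a \<Rightarrow> 'a) \<Rightarrow> ('a \<Rightarrow> real) \<Rightarrow> (('a \<Rightarrow> complex) \<Rightarrow> complex) \<Rightarrow> real" where
  "mult_defect S op \<omega> \<psi> = Sup {norm (\<psi> (l1w_conv S op a b) - \<psi> a * \<psi> b) | a b.
      a \<in> l1w S \<omega> \<and> b \<in> l1w S \<omega> \<and> l1w_norm S \<omega> a \<le> 1 \<and> l1w_norm S \<omega> b \<le> 1}"

(* Mult(l^1_omega(S), C): bounded linear multiplicative functionals, including 0 *)
definition l1w_mult :: "'a set \<Rightarrow> ('a \<Rightarrow> 'a \<Rightarrow> 'a) \<Rightarrow> ('a \<Rightarrow> real) \<Rightarrow> (('a \<Rightarrow> complex) \<Rightarrow> complex) set" where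
  "l1w_mult S op \<omega> = {\<phi> \<in> l1w_dual S \<omega>.
     \<forall>a\<in>l1w S \<omega>. \<forall>b\<in>l1w S \<omega>. \<phi> (l1w_conv S op a b) = \<phi> a * \<phi> b}"

definition dist_mult :: "'a set \<Rightarrow> ('a \<Rightarrow> 'a \<Rightarrow> 'a) \<Rightarrow> ('a \<Rightarrow> real) \<Rightarrow> (('a \<Rightarrow> complex) \<Rightarrow> complex) \<Rightarrow> real" where
  "dist_mult S op \<omega> \<psi> = Inf {dual_norm S \<omega> (\<lambda>a. \<psi> a - \<phi> a) | \<phi>. \<phi> \<in> l1w_mult S op \<omega>}"

definition AMNM_l1w :: "'a set \<Rightarrow> ('a \<Rightarrow> 'a \<Rightarrow> 'a) \<Rightarrow> ('a \<Rightarrow> real) \<Rightarrow> bool" where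
  "AMNM_l1w S op \<omega> \<longleftrightarrow>
     (\<forall>\<epsilon>>0. \<exists>\<delta>>0. \<forall>\<psi>\<in>l1w_dual S \<omega>.
        mult_defect S op \<omega> \<psi> \<le> \<delta> \<longrightarrow> dist_mult S op \<omega> \<psi> \<le> \<epsilon>)"

end

theory Submission
  imports Defs
begin

definition blk :: "nat \<Rightarrow> nat set" where "blk n = {2^n ..< 2^Suc n}"

definition cnt :: "nat set \<Rightarrow> nat" where
  "cnt F = card {x\<in>F. \<not>(\<exists>n. x \<in> blk n \<and> blk n \<subseteq> F)}"

definition wt :: "nat set \<Rightarrow> real" where "wt F = 2 ^ cnt F"

definition SS :: "nat set set" where "SS = {F. finite F}"

definition dl :: "nat set \<Rightarrow> nat set \<Rightarrow> complex" where "dl t = (\<lambda>u. if u = t then 1 else 0)"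

lemma blk_disj: "x \<in> blk n \<Longrightarrow> x \<in> blk m \<Longrightarrow> n = m"
proof (rule ccontr)
  assume a: "x \<in> blk n" "x \<in> blk m" "n \<noteq> m"
  { fix n m :: nat assume "x \<in> blk n" "x \<in> blk m" "n < m"
    then have "(2::nat)^Suc n \<le> 2^m" by (intro power_increasing) auto
    with \<open>x \<in> blk n\<close> \<open>x \<in> blk m\<close> have False by (auto simp: blk_def) }
  with a show False by (metis linorder_neqE_nat)
qed

lemma card_blk: "card (blk n) = 2^n" by (simp add: blk_def)

lemma finite_blk: "finite (blk n)" by (simp add: blk_def)

lemma cnt_sub: "finite F \<Longrightarrow> finite G \<Longrightarrow> cnt (F \<union> G) \<le> cnt F + cnt G"
proof -
  assume f: "finite F" "finite G"
  have "{x\<in>F \<union> G. \<not>(\<exists>n. x \<in> blk n \<and> blk n \<subseteq> F \<union> G)} \<subseteq>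
        {x\<in>F. \<not>(\<exists>n. x \<in> blk n \<and> blk n \<subseteq> F)} \<union> {x\<in>G. \<not>(\<exists>n. x \<in> blk n \<and> blk n \<subseteq> G)}"
    by blast
  then have "cnt (F \<union> G) \<le> card ({x\<in>F. \<not>(\<exists>n. x \<in> blk n \<and> blk n \<subseteq> F)} \<union> {x\<in>G. \<not>(\<exists>n. x \<in> blk n \<and> blk n \<subseteq> G)})"
    unfolding cnt_def using f by (intro card_mono) auto
  also have "\<dots> \<le> cnt F + cnt G" unfolding cnt_def by (rule card_Un_le)
  finally show ?thesis .
qed

lemma cnt_proper: "x \<subseteq> blk n \<Longrightarrow> x \<noteq> blk n \<Longrightarrow> cnt x = card x"
proof -
  assume a: "x \<subseteq> blk n" "x \<noteq> blk n"
  have "{y\<in>x. \<not>(\<exists>m. y \<in> blk m \<and> blk m \<subseteq> x)} = x"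
  proof safe
    fix y m assume "y \<in> x" "y \<in> blk m" "blk m \<subseteq> x"
    with a have "m = n" using blk_disj by blast
    with a \<open>blk m \<subseteq> x\<close> show False by auto
  qed
  then show ?thesis by (simp add: cnt_def)
qed

lemma cnt_blk: "cnt (blk n) = 0"
proof -
  have e: "{x\<in>blk n. \<not>(\<exists>m. x \<in> blk m \<and> blk m \<subseteq> blk n)} = {}" by blast
  show ?thesis unfolding cnt_def e by simp
qed

lemma wt_ge1: "wt F \<ge> 1" by (simp add: wt_def)

lemma infsum_single_supp:
  fixes f :: "'a \<Rightarrow> 'b::{comm_monoid_add, t2_space}"
  assumes "t \<in> A" "\<And>x. x\<in>A \<Longrightarrow> x \<noteq> t \<Longrightarrow> f x = 0"
  shows "infsum f A = f t" "f summable_on A"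
proof -
  have "infsum f A = infsum f {t}" by (rule infsum_cong_neutral) (use assms in auto)
  then show "infsum f A = f t" by simp
  have "f summable_on {t}" by simp
  then show "f summable_on A"
    by (rule summable_on_cong_neutral[THEN iffD1, rotated -1]) (use assms in auto)
qed

lemma semi: "semilattice_on SS (\<union>)"
  unfolding semilattice_on_def SS_def by auto

lemma locfin: "locally_finite_on SS (\<union>)"
  unfolding locally_finite_on_def
proof (intro allI impI)
  fix F :: "nat set set" assume a: "F \<subseteq> SS \<and> finite F"
  have "gen_subsemigroup (\<union>) F \<subseteq> Pow (\<Union>F)"
    unfolding gen_subsemigroup_def by (rule Inter_lower) auto
  moreover have "finite (Pow (\<Union>F))" using a by (auto simp: SS_def)
  ultimately show "finite (gen_subsemigroup (\<union>) F)" by (rule finite_subset)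
qed

lemma submult: "submult_weight_on SS (\<union>) wt"
  unfolding submult_weight_on_def weight_on_def
proof (intro conjI ballI)
  fix t show "0 < wt t" by (simp add: wt_def)
next
  fix x y assume "x \<in> SS" "y \<in> SS"
  then have "cnt (x \<union> y) \<le> cnt x + cnt y" by (intro cnt_sub) (auto simp: SS_def)
  then have "(2::real) ^ cnt (x \<union> y) \<le> 2 ^ (cnt x + cnt y)" by (intro power_increasing) auto
  then show "wt (x \<union> y) \<le> wt x * wt y" by (simp add: wt_def power_add)
qed

lemma sdl_l1w:
  assumes "t \<in> SS"
  shows "(\<lambda>u. c * dl t u) \<in> l1w SS wt" "l1w_norm SS wt (\<lambda>u. c * dl t u) = norm c * wt t"
proof -
  have "infsum (\<lambda>u. norm (c * dl t u) * wt u) SS = norm (c * dl t t) * wt t"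
       "(\<lambda>u. norm (c * dl t u) * wt u) summable_on SS"
    by (rule infsum_single_supp; use assms in \<open>auto simp: dl_def\<close>)+
  then show "(\<lambda>u. c * dl t u) \<in> l1w SS wt" "l1w_norm SS wt (\<lambda>u. c * dl t u) = norm c * wt t"
    using assms by (auto simp: l1w_def l1w_norm_def dl_def)
qed

lemma dl_eq: "dl t = (\<lambda>u. 1 * dl t u)" by simp

lemma dl_l1w: "t \<in> SS \<Longrightarrow> dl t \<in> l1w SS wt"
  using sdl_l1w(1)[of t 1] by simp

lemma conv_dl:
  assumes "s \<in> SS" "t \<in> SS"
  shows "l1w_conv SS (\<union>) (dl s) (dl t) = dl (s \<union> t)"
proof
  fix u
  let ?Q = "{(x, y). x \<in> SS \<and> y \<in> SS \<and> x \<union> y = u}"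
  show "l1w_conv SS (\<union>) (dl s) (dl t) u = dl (s \<union> t) u"
  proof (cases "s \<union> t = u")
    case True
    have "infsum (\<lambda>(x, y). dl s x * dl t y) ?Q = (\<lambda>(x, y). dl s x * dl t y) (s, t)"
      by (rule infsum_single_supp) (use assms True in \<open>auto simp: dl_def split: if_splits\<close>)
    then show ?thesis using True by (simp add: l1w_conv_def dl_def)
  next
    case False
    have "infsum (\<lambda>(x, y). dl s x * dl t y) ?Q = 0"
      by (rule infsum_0) (use False in \<open>auto simp: dl_def split: if_splits\<close>)
    then show ?thesis using False by (simp add: l1w_conv_def dl_def)
  qed
qed

lemma l1w_norm_nonneg: "l1w_norm SS wt a \<ge> 0"
  unfolding l1w_norm_def by (rule infsum_nonneg) (simp add: wt_def)

lemma fin_le_norm: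
  assumes "a \<in> l1w SS wt" "finite P" "P \<subseteq> SS"
  shows "(\<Sum>F\<in>P. norm (a F) * wt F) \<le> l1w_norm SS wt a"
proof -
  have "infsum (\<lambda>F. norm (a F) * wt F) P \<le> infsum (\<lambda>F. norm (a F) * wt F) SS"
    by (rule infsum_mono_neutral) (use assms in \<open>auto simp: l1w_def wt_def\<close>)
  then show ?thesis using assms by (simp add: l1w_norm_def)
qed

definition psi :: "nat \<Rightarrow> (nat set \<Rightarrow> complex) \<Rightarrow> complex" where
  "psi n a = (\<Sum>F\<in>Pow (blk n) - {blk n}. a F)"

lemma fin_P: "finite (Pow (blk n) - {blk n})" by (simp add: finite_blk)

lemma P_SS: "Pow (blk n) - {blk n} \<subseteq> SS"
  using finite_blk by (auto simp: SS_def intro: finite_subset)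

lemma psi_bound: "a \<in> l1w SS wt \<Longrightarrow> norm (psi n a) \<le> l1w_norm SS wt a"
proof -
  assume a: "a \<in> l1w SS wt"
  have "norm (psi n a) \<le> (\<Sum>F\<in>Pow (blk n) - {blk n}. norm (a F))"
    unfolding psi_def by (rule norm_sum)
  also have "\<dots> \<le> (\<Sum>F\<in>Pow (blk n) - {blk n}. norm (a F) * wt F)"
    by (intro sum_mono) (simp add: mult_le_cancel_left1 wt_ge1)
  also have "\<dots> \<le> l1w_norm SS wt a" by (rule fin_le_norm[OF a fin_P P_SS])
  finally show ?thesis .
qed

lemma psi_dual: "psi n \<in> l1w_dual SS wt"
  unfolding l1w_dual_def
proof (intro CollectI conjI ballI allI)
  fix a b show "psi n (\<lambda>t. a t + b t) = psi n a + psi n b" by (simp add: psi_def sum.distrib)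
next
  fix a c show "psi n (\<lambda>t. c * a t) = c * psi n a" by (simp add: psi_def sum_distrib_left)
next
  show "\<exists>C. \<forall>a\<in>l1w SS wt. norm (psi n a) \<le> C * l1w_norm SS wt a"
    using psi_bound by (intro exI[of _ 1]) auto
qed

lemma defect_bound:
  assumes a: "a \<in> l1w SS wt" and b: "b \<in> l1w SS wt"
    and na: "l1w_norm SS wt a \<le> 1" and nb: "l1w_norm SS wt b \<le> 1"
  shows "norm (psi n (l1w_conv SS (\<union>) a b) - psi n a * psi n b) \<le> (1/2) ^ (2^n)"
proof -
  define B where "B = blk n"
  define P where "P = Pow B - {B}"
  define g where "g = (\<lambda>(x, y). a x * b y)"
  define D where "D = {p \<in> P \<times> P. fst p \<union> snd p \<noteq> B}"
  define E where "E = {p \<in> P \<times> P. fst p \<union> snd p = B}"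
  have fP: "finite P" unfolding P_def B_def by (rule fin_P)
  have PSS: "P \<subseteq> SS" unfolding P_def B_def by (rule P_SS)
  have fB: "finite B" unfolding B_def by (rule finite_blk)
  have fD: "finite D" unfolding D_def using fP by auto
  have fE: "finite E" unfolding E_def using fP by auto
  have conv: "l1w_conv SS (\<union>) a b F = sum g {p \<in> D. fst p \<union> snd p = F}" if F: "F \<in> P" for F
  proof -
    have eq: "{(x, y). x \<in> SS \<and> y \<in> SS \<and> x \<union> y = F} = {p \<in> D. fst p \<union> snd p = F}"
      using F fB by (auto simp: D_def P_def SS_def intro: finite_subset)
    have "finite {p \<in> D. fst p \<union> snd p = F}" using fD by auto
    then show ?thesis unfolding l1w_conv_def eq g_def by simp
  qed
  have s1: "psi n (l1w_conv SS (\<union>) a b) = sum g D"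
  proof -
    have "psi n (l1w_conv SS (\<union>) a b) = (\<Sum>F\<in>P. sum g {p \<in> D. fst p \<union> snd p = F})"
      unfolding psi_def P_def[symmetric] B_def[symmetric] using conv by (intro sum.cong) auto
    also have "\<dots> = sum g D"
      by (rule sum.group[OF fD fP]) (auto simp: D_def P_def)
    finally show ?thesis .
  qed
  have s2: "psi n a * psi n b = sum g (P \<times> P)"
    unfolding psi_def P_def[symmetric] B_def[symmetric] g_def
    by (simp add: sum_product sum.cartesian_product)
  have DE: "P \<times> P - E = D" unfolding D_def E_def by auto
  have s3: "sum g (P \<times> P) = sum g D + sum g E"
    using sum.subset_diff[of E "P \<times> P" g] fP DE by (auto simp: E_def)
  have "norm (psi n (l1w_conv SS (\<union>) a b) - psi n a * psi n b) = norm (sum g E)"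
    using s1 s2 s3 by (simp add: norm_minus_commute)
  also have "\<dots> \<le> (\<Sum>p\<in>E. norm (g p))" by (rule norm_sum)
  also have "\<dots> \<le> (\<Sum>p\<in>E. (1/2)^(2^n) * ((norm (a (fst p)) * wt (fst p)) * (norm (b (snd p)) * wt (snd p))))"
  proof (rule sum_mono)
    fix p assume p: "p \<in> E"
    obtain x y where xy: "p = (x, y)" by force
    have x: "x \<subseteq> B" "x \<noteq> B" and y: "y \<subseteq> B" "y \<noteq> B" and u: "x \<union> y = B"
      using p xy by (auto simp: E_def P_def)
    have fx: "finite x" "finite y" using x y fB by (auto intro: finite_subset)
    have "(2::nat)^n \<le> card x + card y"
      using card_Un_le[of x y] u card_blk[of n] by (simp add: B_def)
    then have "(2::real)^(2^n) \<le> 2^(card x + card y)" by (intro power_increasing) auto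
    then have "1 \<le> (1/2::real)^(2^n) * (wt x * wt y)"
      using cnt_proper[of x n] cnt_proper[of y n] x y
      by (simp add: wt_def B_def power_add divide_simps power_one_over)
    then have "norm (a x) * norm (b y) * 1 \<le> norm (a x) * norm (b y) * ((1/2::real)^(2^n) * (wt x * wt y))"
      by (intro mult_left_mono) auto
    then show "norm (g p) \<le> (1/2)^(2^n) * ((norm (a (fst p)) * wt (fst p)) * (norm (b (snd p)) * wt (snd p)))"
      by (simp add: xy g_def norm_mult algebra_simps)
  qed
  also have "\<dots> \<le> (\<Sum>p\<in>P \<times> P. (1/2)^(2^n) * ((norm (a (fst p)) * wt (fst p)) * (norm (b (snd p)) * wt (snd p))))"
    by (rule sum_mono2) (use fP in \<open>auto simp: E_def wt_def\<close>)
  also have "\<dots> = (1/2)^(2^n) * ((\<Sum>x\<in>P. norm (a x) * wt x) * (\<Sum>y\<in>P. norm (b y) * wt y))"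
  proof -
    have "(\<Sum>x\<in>P. norm (a x) * wt x) * (\<Sum>y\<in>P. norm (b y) * wt y)
        = (\<Sum>p\<in>P \<times> P. (norm (a (fst p)) * wt (fst p)) * (norm (b (snd p)) * wt (snd p)))"
      unfolding sum_product sum.cartesian_product by (simp add: case_prod_beta)
    then show ?thesis by (simp add: sum_distrib_left)
  qed
  also have "\<dots> \<le> (1/2)^(2^n) * (1 * 1)"
  proof -
    have "(\<Sum>x\<in>P. norm (a x) * wt x) \<le> 1" using fin_le_norm[OF a fP PSS] na by linarith
    moreover have "(\<Sum>x\<in>P. norm (b x) * wt x) \<le> 1" using fin_le_norm[OF b fP PSS] nb by linarith
    moreover have "0 \<le> (\<Sum>x\<in>P. norm (a x) * wt x)" "0 \<le> (\<Sum>x\<in>P. norm (b x) * wt x)"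
      by (auto intro!: sum_nonneg simp: wt_def)
    ultimately show ?thesis by (intro mult_left_mono mult_mono) auto
  qed
  finally show ?thesis by simp
qed

lemma zero_l1w: "(\<lambda>_. 0) \<in> l1w SS wt" "l1w_norm SS wt (\<lambda>_. 0) = 0"
  by (auto simp: l1w_def l1w_norm_def)

lemma defect_le: "mult_defect SS (\<union>) wt (psi n) \<le> (1/2) ^ (2^n)"
  unfolding mult_defect_def
proof (rule cSup_least)
  show "{norm (psi n (l1w_conv SS (\<union>) a b) - psi n a * psi n b) | a b.
      a \<in> l1w SS wt \<and> b \<in> l1w SS wt \<and> l1w_norm SS wt a \<le> 1 \<and> l1w_norm SS wt b \<le> 1} \<noteq> {}"
    using zero_l1w by fastforce
qed (use defect_bound in auto)

lemma dual_norm_ge: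
  assumes p: "\<psi> \<in> l1w_dual SS wt" and f: "\<phi> \<in> l1w_dual SS wt"
    and a: "a \<in> l1w SS wt" "l1w_norm SS wt a \<le> 1"
  shows "norm (\<psi> a - \<phi> a) \<le> dual_norm SS wt (\<lambda>a. \<psi> a - \<phi> a)"
  unfolding dual_norm_def
proof (rule cSup_upper)
  show "norm (\<psi> a - \<phi> a) \<in> {norm (\<psi> a - \<phi> a) |a. a \<in> l1w SS wt \<and> l1w_norm SS wt a \<le> 1}"
    using a by auto
  obtain C1 where C1: "\<forall>a\<in>l1w SS wt. norm (\<psi> a) \<le> C1 * l1w_norm SS wt a" using p by (auto simp: l1w_dual_def)
  obtain C2 where C2: "\<forall>a\<in>l1w SS wt. norm (\<phi> a) \<le> C2 * l1w_norm SS wt a" using f by (auto simp: l1w_dual_def)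
  have bnd: "C * N \<le> \<bar>C\<bar>" if "0 \<le> N" "N \<le> 1" for C N :: real
  proof -
    have "C * N \<le> \<bar>C\<bar> * N" using that by (intro mult_right_mono) auto
    also have "\<dots> \<le> \<bar>C\<bar>" using that by (intro mult_left_le) auto
    finally show ?thesis .
  qed
  show "bdd_above {norm (\<psi> a - \<phi> a) |a. a \<in> l1w SS wt \<and> l1w_norm SS wt a \<le> 1}"
  proof (rule bdd_aboveI[of _ "\<bar>C1\<bar> + \<bar>C2\<bar>"], clarify)
    fix b assume b: "b \<in> l1w SS wt" "l1w_norm SS wt b \<le> 1"
    have "norm (\<psi> b - \<phi> b) \<le> norm (\<psi> b) + norm (\<phi> b)" by (rule norm_triangle_ineq4)
    also have "\<dots> \<le> C1 * l1w_norm SS wt b + C2 * l1w_norm SS wt b" using C1 C2 b by (intro add_mono) auto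
    also have "\<dots> \<le> \<bar>C1\<bar> + \<bar>C2\<bar>" using bnd[of "l1w_norm SS wt b"] b l1w_norm_nonneg by (intro add_mono) auto
    finally show "norm (\<psi> b - \<phi> b) \<le> \<bar>C1\<bar> + \<bar>C2\<bar>" .
  qed
qed

lemma psi_dl: "psi n (dl t) = (if t \<in> Pow (blk n) - {blk n} then 1 else 0)"
  unfolding psi_def dl_def by (simp add: sum.delta[OF fin_P] )

lemma dist_ge:
  assumes n: "n \<ge> 1" and phi: "\<phi> \<in> l1w_mult SS (\<union>) wt"
  shows "1/2 \<le> dual_norm SS wt (\<lambda>a. psi n a - \<phi> a)"
proof -
  define e where "e t = \<phi> (dl t)" for t
  define B where "B = blk n"
  have fB: "finite B" unfolding B_def by (rule finite_blk)
  have phd: "\<phi> \<in> l1w_dual SS wt" using phi by (simp add: l1w_mult_def)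
  have emul: "e (s \<union> t) = e s * e t" if "s \<in> SS" "t \<in> SS" for s t
  proof -
    have m: "\<forall>a\<in>l1w SS wt. \<forall>b\<in>l1w SS wt. \<phi> (l1w_conv SS (\<union>) a b) = \<phi> a * \<phi> b"
      using phi by (simp add: l1w_mult_def)
    show ?thesis using m[rule_format, OF dl_l1w[OF that(1)] dl_l1w[OF that(2)]]
      unfolding conv_dl[OF that] e_def .
  qed
  have eid: "e t = 0 \<or> e t = 1" if "t \<in> SS" for t
  proof -
    have "e t = e t * e t" using emul[OF that that] by simp
    then show ?thesis by (metis mult_cancel_left1 mult_eq_0_iff)
  qed
  have key: "norm ((if t \<in> Pow B - {B} then 1 else 0) - e t) / wt t \<le> dual_norm SS wt (\<lambda>a. psi n a - \<phi> a)"
    if t: "t \<in> SS" for t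
  proof -
    define c where "c = complex_of_real (1 / wt t)"
    have w0: "wt t > 0" by (simp add: wt_def)
    have l: "(\<lambda>u. c * dl t u) \<in> l1w SS wt" "l1w_norm SS wt (\<lambda>u. c * dl t u) = 1"
      using sdl_l1w[OF t, of c] w0 by (auto simp: c_def norm_divide)
    have "\<phi> (\<lambda>u. c * dl t u) = c * e t" using phd dl_l1w[OF t] by (auto simp: l1w_dual_def e_def)
    moreover have "psi n (\<lambda>u. c * dl t u) = c * psi n (dl t)" by (simp add: psi_def sum_distrib_left)
    ultimately have "psi n (\<lambda>u. c * dl t u) - \<phi> (\<lambda>u. c * dl t u)
       = c * ((if t \<in> Pow B - {B} then 1 else 0) - e t)"
      by (simp only: psi_dl B_def right_diff_distrib)
    moreover have "norm c = 1 / wt t" unfolding c_def norm_of_real using w0 by simp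
    ultimately have eq: "norm (psi n (\<lambda>u. c * dl t u) - \<phi> (\<lambda>u. c * dl t u))
       = norm ((if t \<in> Pow B - {B} then 1 else 0) - e t) / wt t"
      by (simp add: norm_mult)
    have "norm (psi n (\<lambda>u. c * dl t u) - \<phi> (\<lambda>u. c * dl t u)) \<le> dual_norm SS wt (\<lambda>a. psi n a - \<phi> a)"
      by (rule dual_norm_ge[OF psi_dual[of n] phd l(1)]) (simp add: l(2))
    then show ?thesis unfolding eq .
  qed
  have BSS: "B \<in> SS" using fB by (simp add: SS_def)
  show ?thesis
  proof (cases "e B = 1")
    case True
    have "wt B = 1" by (simp add: wt_def B_def cnt_blk)
    then show ?thesis using key[OF BSS] True by simp
  next
    case False
    have all1: "\<And>G. finite G \<Longrightarrow> G \<noteq> {} \<Longrightarrow> (\<forall>i\<in>G. e {i} = 1) \<longrightarrow> e G = 1"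
    proof -
      fix G :: "nat set" assume "finite G" "G \<noteq> {}"
      then show "(\<forall>i\<in>G. e {i} = 1) \<longrightarrow> e G = 1"
      proof (induction G rule: finite_ne_induct)
        case (singleton x) then show ?case by simp
      next
        case (insert x F)
        have "e (insert x F) = e ({x} \<union> F)" by simp
        also have "\<dots> = e {x} * e F" using insert by (intro emul) (auto simp: SS_def)
        finally show ?case using insert by simp
      qed
    qed
    have "B \<noteq> {}" using card_blk[of n] by (auto simp: B_def)
    then obtain i where i: "i \<in> B" "e {i} \<noteq> 1" using all1[OF fB] False by blast
    have iSS: "{i} \<in> SS" by (simp add: SS_def)
    have e0: "e {i} = 0" using eid[OF iSS] i by auto
    have "card B \<ge> 2" using card_blk[of n] n unfolding B_def
      by (metis One_nat_def le_add_diff_inverse nat_power_less_imp_less not_less numeral_2_eq_2 power_one_right power_increasing zero_less_numeral)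
    then have iP: "{i} \<in> Pow B - {B}" using i by auto
    have "wt {i} = 2" using cnt_proper[of "{i}" n] iP by (simp add: wt_def B_def)
    then show ?thesis using key[OF iSS] iP e0 by simp
  qed
qed

lemma zero_mult: "(\<lambda>_. 0) \<in> l1w_mult SS (\<union>) wt"
  unfolding l1w_mult_def l1w_dual_def by (auto intro!: exI[of _ 0])

lemma dist_mult_ge: "n \<ge> 1 \<Longrightarrow> 1/2 \<le> dist_mult SS (\<union>) wt (psi n)"
  unfolding dist_mult_def
proof (rule cInf_greatest)
  show "{dual_norm SS wt (\<lambda>a. psi n a - \<phi> a) |\<phi>. \<phi> \<in> l1w_mult SS (\<union>) wt} \<noteq> {}"
    using zero_mult by blast
qed (use dist_ge in auto)

theorem theoremt:
  shows "\<exists>(S :: nat set set) op \<omega>.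
           semilattice_on S op \<and> locally_finite_on S op \<and> submult_weight_on S op \<omega> \<and>
           \<not> AMNM_l1w S op \<omega>"
proof (intro exI conjI)
  show "semilattice_on SS (\<union>)" by (rule semi)
  show "locally_finite_on SS (\<union>)" by (rule locfin)
  show "submult_weight_on SS (\<union>) wt" by (rule submult)
  show "\<not> AMNM_l1w SS (\<union>) wt"
    unfolding AMNM_l1w_def
  proof
    assume h: "\<forall>\<epsilon>>0. \<exists>\<delta>>0. \<forall>\<psi>\<in>l1w_dual SS wt.
        mult_defect SS (\<union>) wt \<psi> \<le> \<delta> \<longrightarrow> dist_mult SS (\<union>) wt \<psi> \<le> \<epsilon>"
    obtain \<delta> where d: "\<delta> > 0" "\<forall>\<psi>\<in>l1w_dual SS wt.
        mult_defect SS (\<union>) wt \<psi> \<le> \<delta> \<longrightarrow> dist_mult SS (\<union>) wt \<psi> \<le> 1/4"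
      using h[rule_format, of "1/4"] by auto
    obtain k where k: "(1/2::real)^k < \<delta>" using real_arch_pow_inv[OF d(1), of "1/2"] by auto
    define m where "m = Suc k"
    have "(1/2::real)^(2^m) \<le> (1/2)^m" by (intro power_decreasing) (auto intro: less_imp_le less_exp)
    also have "\<dots> \<le> (1/2)^k" unfolding m_def by (intro power_decreasing) auto
    finally have "mult_defect SS (\<union>) wt (psi m) \<le> \<delta>" using defect_le[of m] k by linarith
    then have "dist_mult SS (\<union>) wt (psi m) \<le> 1/4" using d(2) psi_dual by blast
    moreover have "1/2 \<le> dist_mult SS (\<union>) wt (psi m)" by (rule dist_mult_ge) (simp add: m_def)
    ultimately show False by linarith
  qed
qed

end
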